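(* Let $\beta_0,\beta_1,\beta_2,\beta_3,\beta_4\in\mathbb{R}$, and put $$L^{+}:=\sqrt{(\beta_1+\beta_4)^2+(\beta_2-\beta_3)^2},\qquad L^{-}:=\sqrt{(\beta_1-\beta_4)^2+(\beta_2+\beta_3)^2}.$$ Let $\rho$ be a generalised two-qubit $X$-state of Group 2 of Type I with maximally-mixed subsystems ($\tau_1=\tau_2=0$) and these parameters, so that the eigenvalues of $\rho$ are $\tfrac14(1+\beta_0\pm L^{-})$, $\tfrac14(1-\beta_0\pm L^{+})$. Suppose $\rho$ is valid and entangled. Then $\beta_0<0$ if and only if $L^{+}>L^{-}$.
   Context: A two-qubit Hermitian $4\times4$ matrix $\rho$ of trace one is called valid if it is positive semidefinite. For a valid $\rho$, $\rho^{\Gamma}$ denotes its partial transpose (with respect to either qubit). $\rho$ is called separable if $\rho^{\Gamma}$ is positive semidefinite and entangled otherwise (PPT criterion). Group 2 $X$-states are two-qubit density matrices of the form $\rho=\tfrac14(I\otimes I+\sum_{q}c_q\,q)$, where $q$ ranges over the seven nontrivial Pauli operators commuting with a fixed operator $A\otimes B$ with $A,B\in\{X,Y,Z\}$. Example: for $A\otimes B=Z\otimes Z$, $\rho=\tfrac14(I\otimes I+\tau_1 Z\otimes I+\tau_2 I\otimes Z+\beta_0 Z\otimes Z+\beta_1 X\otimes X+\beta_2 X\otimes Y+\beta_3 Y\otimes X+\beta_4 Y\otimes Y)$. In general $\tau_1,\tau_2$ are the coefficients of the two local operators, $\beta_0$ is the coefficient of the correlation operator sharing no tensor factor with the other correlation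 operators, and $\beta_1,\beta_2,\beta_3,\beta_4$ are the entries of the remaining $2\times2$ block $\begin{pmatrix}\beta_1&\beta_2\\ \beta_3&\beta_4\end{pmatrix}$ of the correlation matrix. "Maximally-mixed subsystems" means $\tau_1=\tau_2=0$. Such a state with $\tau_1=\tau_2=0$ is of Type I if the eigenvalues of $\rho$ are $\tfrac14(1+\beta_0\pm L^{-})$ and $\tfrac14(1-\beta_0\pm L^{+})$, and the eigenvalues of $\rho^{\Gamma}$ are $\tfrac14(1+\beta_0\pm L^{+})$ and $\tfrac14(1-\beta_0\pm L^{-})$. The $Z\otimes Z$ example above is of Type I. *)

theory Defs
  imports "Jordan_Normal_Form.Matrix" "Jordan_Normal_Form.Char_Poly" "HOL-Library.Multiset"
begin

text \<open>Single-qubit Pauli matrices: index 0 = I, 1 = X, 2 = Y, 3 = Z.\<close>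
definition pauli :: "nat \<Rightarrow> complex mat" where
  "pauli k = (if k = 1 then mat_of_rows_list 2 [[0, 1], [1, 0]]
              else if k = 2 then mat_of_rows_list 2 [[0, -\<i>], [\<i>, 0]]
              else if k = 3 then mat_of_rows_list 2 [[1, 0], [0, -1]]
              else mat_of_rows_list 2 [[1, 0], [0, 1]])"

text \<open>Kronecker product of two 2x2 matrices (basis order |00>,|01>,|10>,|11>).\<close>
definition kron2 :: "complex mat \<Rightarrow> complex mat \<Rightarrow> complex mat" where
  "kron2 A B = mat 4 4 (\<lambda>(i, j). A $$ (i div 2, j div 2) * B $$ (i mod 2, j mod 2))"

definition pp :: "nat \<Rightarrow> nat \<Rightarrow> complex mat" where
  "pp a b = kron2 (pauli a) (pauli b)"

definition nxt :: "nat \<Rightarrow> nat" where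
  "nxt k = k mod 3 + 1"

text \<open>The remaining correlation block is indexed by the two Paulis other than A
  (resp. B), in cyclic order after A (resp. B); for A (x) B = Z (x) Z this gives
  rows X, Y and columns X, Y, as in the paper's example.\<close>
definition group2_state ::
  "nat \<Rightarrow> nat \<Rightarrow> real \<Rightarrow> real \<Rightarrow> real \<Rightarrow> real \<Rightarrow> real \<Rightarrow> real \<Rightarrow> real \<Rightarrow> complex mat" where
  "group2_state a b t1 t2 b0 b1 b2 b3 b4 =
     (let p1 = nxt a; p2 = nxt (nxt a); q1 = nxt b; q2 = nxt (nxt b) in
      (1/4 :: complex) \<cdot>\<^sub>m
        (pp 0 0 + complex_of_real t1 \<cdot>\<^sub>m pp a 0 + complex_of_real t2 \<cdot>\<^sub>m pp 0 b
         + complex_of_real b0 \<cdot>\<^sub>m pp a b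
         + complex_of_real b1 \<cdot>\<^sub>m pp p1 q1 + complex_of_real b2 \<cdot>\<^sub>m pp p1 q2
         + complex_of_real b3 \<cdot>\<^sub>m pp p2 q1 + complex_of_real b4 \<cdot>\<^sub>m pp p2 q2))"

text \<open>Partial transpose with respect to the second qubit.\<close>
definition partial_transpose :: "complex mat \<Rightarrow> complex mat" where
  "partial_transpose R = mat 4 4 (\<lambda>(i, j).
      R $$ (2 * (i div 2) + j mod 2, 2 * (j div 2) + i mod 2))"

definition hermitian :: "complex mat \<Rightarrow> bool" where
  "hermitian A \<longleftrightarrow> (\<forall>i<dim_row A. \<forall>j<dim_col A. A $$ (i, j) = cnj (A $$ (j, i)))"

definition psd :: "complex mat \<Rightarrow> bool" where
  "psd A \<longleftrightarrow> dim_row A = dim_col A \<and> hermitian A \<and>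
     (\<forall>v \<in> carrier_vec (dim_row A).
        Im (conjugate v \<bullet> (A *\<^sub>v v)) = 0 \<and> Re (conjugate v \<bullet> (A *\<^sub>v v)) \<ge> 0)"

definition mtrace :: "complex mat \<Rightarrow> complex" where
  "mtrace A = (\<Sum>i<dim_row A. A $$ (i, i))"

definition valid_state :: "complex mat \<Rightarrow> bool" where
  "valid_state R \<longleftrightarrow> R \<in> carrier_mat 4 4 \<and> hermitian R \<and> mtrace R = 1 \<and> psd R"

definition separable :: "complex mat \<Rightarrow> bool" where
  "separable R \<longleftrightarrow> psd (partial_transpose R)"

definition entangled :: "complex mat \<Rightarrow> bool" where
  "entangled R \<longleftrightarrow> \<not> psd (partial_transpose R)"

definition has_eigenvalues :: "complex mat \<Rightarrow> complex multiset \<Rightarrow> bool" where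
  "has_eigenvalues A M \<longleftrightarrow> char_poly A = prod_mset (image_mset (\<lambda>x. [:- x, 1:]) M)"

definition Lplus :: "real \<Rightarrow> real \<Rightarrow> real \<Rightarrow> real \<Rightarrow> real" where
  "Lplus b1 b2 b3 b4 = sqrt ((b1 + b4)^2 + (b2 - b3)^2)"

definition Lminus :: "real \<Rightarrow> real \<Rightarrow> real \<Rightarrow> real \<Rightarrow> real" where
  "Lminus b1 b2 b3 b4 = sqrt ((b1 - b4)^2 + (b2 + b3)^2)"

text \<open>Type I (for maximally mixed subsystems): prescribed spectra of rho and rho^Gamma.\<close>
definition typeI :: "complex mat \<Rightarrow> real \<Rightarrow> real \<Rightarrow> real \<Rightarrow> real \<Rightarrow> real \<Rightarrow> bool" where
  "typeI R b0 b1 b2 b3 b4 \<longleftrightarrow>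
     (let Lp = Lplus b1 b2 b3 b4; Lm = Lminus b1 b2 b3 b4 in
      has_eigenvalues R (image_mset complex_of_real
        {# (1 + b0 + Lm)/4, (1 + b0 - Lm)/4, (1 - b0 + Lp)/4, (1 - b0 - Lp)/4 #}) \<and>
      has_eigenvalues (partial_transpose R) (image_mset complex_of_real
        {# (1 + b0 + Lp)/4, (1 + b0 - Lp)/4, (1 - b0 + Lm)/4, (1 - b0 - Lm)/4 #}))"

end

theory Submission
  imports Defs
begin
lemma pauli_dim[simp]: "pauli k \<in> carrier_mat 2 2"
  unfolding pauli_def by (auto simp: mat_of_rows_list_def)

lemma pp_dim[simp]: "pp a b \<in> carrier_mat 4 4"
  unfolding pp_def kron2_def by simp

lemma pp_idx: "i < 4 \<Longrightarrow> j < 4 \<Longrightarrow> pp a b $$ (i,j) = pauli a $$ (i div 2, j div 2) * pauli b $$ (i mod 2, j mod 2)"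
  unfolding pp_def kron2_def by simp

lemma pauli_tab:
  "pauli 0 $$ (0,0) = 1" "pauli 0 $$ (0,1) = 0" "pauli 0 $$ (1,0) = 0" "pauli 0 $$ (1,1) = 1"
  "pauli 1 $$ (0,0) = 0" "pauli 1 $$ (0,1) = 1" "pauli 1 $$ (1,0) = 1" "pauli 1 $$ (1,1) = 0"
  "pauli 2 $$ (0,0) = 0" "pauli 2 $$ (0,1) = -\<i>" "pauli 2 $$ (1,0) = \<i>" "pauli 2 $$ (1,1) = 0"
  "pauli 3 $$ (0,0) = 1" "pauli 3 $$ (0,1) = 0" "pauli 3 $$ (1,0) = 0" "pauli 3 $$ (1,1) = -1"
  by (simp_all add: pauli_def mat_of_rows_list_def)

lemma pauli_tab2:
  "pauli (0) $$ (0, 0) = 1"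
  "pauli (0) $$ (0, Suc 0) = 0"
  "pauli (0) $$ (Suc 0, 0) = 0"
  "pauli (0) $$ (Suc 0, Suc 0) = 1"
  "pauli (Suc 0) $$ (0, 0) = 0"
  "pauli (Suc 0) $$ (0, Suc 0) = 1"
  "pauli (Suc 0) $$ (Suc 0, 0) = 1"
  "pauli (Suc 0) $$ (Suc 0, Suc 0) = 0"
  "pauli (2) $$ (0, 0) = 0"
  "pauli (2) $$ (0, Suc 0) = -\<i>"
  "pauli (2) $$ (Suc 0, 0) = \<i>"
  "pauli (2) $$ (Suc 0, Suc 0) = 0"
  "pauli (3) $$ (0, 0) = 1"
  "pauli (3) $$ (0, Suc 0) = 0"
  "pauli (3) $$ (Suc 0, 0) = 0"
  "pauli (3) $$ (Suc 0, Suc 0) = -1"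
  by (simp_all add: pauli_def mat_of_rows_list_def)

lemma sum8_idx: assumes "A0 \<in> carrier_mat n n" "A1 \<in> carrier_mat n n" "A2 \<in> carrier_mat n n" "A3 \<in> carrier_mat n n"
  "A4 \<in> carrier_mat n n" "A5 \<in> carrier_mat n n" "A6 \<in> carrier_mat n n" "A7 \<in> carrier_mat n n" "i < n" "j < n"
  shows "(c \<cdot>\<^sub>m (A0 + x1 \<cdot>\<^sub>m A1 + x2 \<cdot>\<^sub>m A2 + x3 \<cdot>\<^sub>m A3 + x4 \<cdot>\<^sub>m A4
     + x5 \<cdot>\<^sub>m A5 + x6 \<cdot>\<^sub>m A6 + x7 \<cdot>\<^sub>m A7)) $$ (i,j) =
    c * (A0 $$ (i,j) + x1 * A1 $$ (i,j) + x2 * A2 $$ (i,j) + x3 * A3 $$ (i,j) + x4 * A4 $$ (i,j)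
     + x5 * A5 $$ (i,j) + x6 * A6 $$ (i,j) + x7 * A7 $$ (i,j))"
  using assms by simp

lemma g2_dim[simp]: "group2_state a b t1 t2 b0 b1 b2 b3 b4 \<in> carrier_mat 4 4"
  unfolding group2_state_def Let_def by simp

lemma g2_idx: "i < 4 \<Longrightarrow> j < 4 \<Longrightarrow> group2_state a b t1 t2 b0 b1 b2 b3 b4 $$ (i,j) =
   1/4 * (pp 0 0 $$ (i,j) + t1 * pp a 0 $$ (i,j) + t2 * pp 0 b $$ (i,j) + b0 * pp a b $$ (i,j)
    + b1 * pp (nxt a) (nxt b) $$ (i,j) + b2 * pp (nxt a) (nxt (nxt b)) $$ (i,j)
    + b3 * pp (nxt (nxt a)) (nxt b) $$ (i,j) + b4 * pp (nxt (nxt a)) (nxt (nxt b)) $$ (i,j))"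
  unfolding group2_state_def Let_def
  by (rule sum8_idx) auto

lemma pt_dim[simp]: "partial_transpose R \<in> carrier_mat 4 4"
  unfolding partial_transpose_def by simp

lemma pt_idx: "i < 4 \<Longrightarrow> j < 4 \<Longrightarrow> partial_transpose R $$ (i,j) = R $$ (2 * (i div 2) + j mod 2, 2 * (j div 2) + i mod 2)"
  unfolding partial_transpose_def by simp

lemma qf: assumes "v \<in> carrier_vec 4" "N \<in> carrier_mat 4 4"
  shows "conjugate v \<bullet> (N *\<^sub>v v) = (\<Sum>i<4. \<Sum>j<4. cnj (v$i) * N$$(i,j) * v$j)"
  using assms by (auto simp: scalar_prod_def mult_mat_vec_def sum_distrib_left mult.assoc lessThan_atLeast0 intro!: sum.cong)

lemma sum4: "(\<Sum>i<4. f i) = f 0 + f 1 + f 2 + (f (3::nat) :: complex)"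
  by (simp add: eval_nat_numeral)

lemma nxt_simps: "nxt 1 = 2" "nxt 2 = 3" "nxt 3 = 1" "nxt (Suc 0) = 2" by (simp_all add: nxt_def)

definition XF :: "real \<Rightarrow> real \<Rightarrow> complex \<Rightarrow> complex \<Rightarrow> complex \<Rightarrow> complex \<Rightarrow> complex \<Rightarrow> complex \<Rightarrow> complex" where
"XF d e z u w0 w1 w2 w3 = d*(cnj w0*w0) + z*(cnj w0*w3) + cnj z*(cnj w3*w0) + d*(cnj w3*w3)
   + e*(cnj w1*w1) + u*(cnj w1*w2) + cnj u*(cnj w2*w1) + e*(cnj w2*w2)"


lemma blk:
  fixes d :: real and z p q :: complex
  assumes "cmod z \<le> d"
  shows "0 \<le> Re (d*(cnj p*p) + z*(cnj p*q) + cnj z*(cnj q*p) + d*(cnj q*q)) \<and>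
         Im (d*(cnj p*p) + z*(cnj p*q) + cnj z*(cnj q*p) + d*(cnj q*q)) = 0"
proof -
  define s where "s = z*(cnj p*q)"
  have e1: "cnj z*(cnj q*p) = cnj s" unfolding s_def by (simp add: mult.commute)
  have ep: "cnj p * p = complex_of_real ((cmod p)^2)"
    using complex_norm_square[of p] by (simp add: mult.commute)
  have eq: "cnj q * q = complex_of_real ((cmod q)^2)"
    using complex_norm_square[of q] by (simp add: mult.commute)
  have ss: "s + cnj s = complex_of_real (2 * Re s)" by (rule complex_add_cnj)
  have X: "d*(cnj p*p) + z*(cnj p*q) + cnj z*(cnj q*p) + d*(cnj q*q)
      = complex_of_real (d * (cmod p)^2 + d * (cmod q)^2 + 2 * Re s)"
    unfolding e1 ep eq s_def[symmetric] using ss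
    by (simp add: algebra_simps)
  have cs: "cmod s = cmod z * cmod p * cmod q" unfolding s_def by (simp add: norm_mult)
  have rs: "- cmod s \<le> Re s" using abs_Re_le_cmod[of s] by linarith
  have z0: "0 \<le> cmod z" by simp
  have "0 \<le> (d - cmod z) * ((cmod p)^2 + (cmod q)^2) + cmod z * (cmod p - cmod q)^2"
    using assms z0 by (intro add_nonneg_nonneg mult_nonneg_nonneg) auto
  then have "0 \<le> d * (cmod p)^2 + d * (cmod q)^2 - 2 * (cmod z * cmod p * cmod q)"
    by (simp add: algebra_simps power2_eq_square)
  then have "0 \<le> d * (cmod p)^2 + d * (cmod q)^2 + 2 * Re s" using rs cs by linarith
  then show ?thesis unfolding X by simp
qed

lemma XF_nonneg:
  assumes "cmod z \<le> d" "cmod u \<le> e"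
  shows "0 \<le> Re (XF d e z u w0 w1 w2 w3) \<and> Im (XF d e z u w0 w1 w2 w3) = 0"
proof -
  have A: "XF d e z u w0 w1 w2 w3 =
     (d*(cnj w0*w0) + z*(cnj w0*w3) + cnj z*(cnj w3*w0) + d*(cnj w3*w3))
   + (e*(cnj w1*w1) + u*(cnj w1*w2) + cnj u*(cnj w2*w1) + e*(cnj w2*w2))"
    unfolding XF_def by (simp add: algebra_simps)
  show ?thesis unfolding A using blk[OF assms(1), of w0 w3] blk[OF assms(2), of w1 w2] by simp
qed

lemma all4: "(\<forall>i<(4::nat). P i) \<longleftrightarrow> P 0 \<and> P 1 \<and> P 2 \<and> P 3"
  by (auto simp: eval_nat_numeral less_Suc_eq)

lemma pt_herm: assumes "hermitian R" "R \<in> carrier_mat 4 4"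
  shows "hermitian (partial_transpose R)"
  unfolding hermitian_def
proof (intro allI impI)
  fix i j assume i: "i < dim_row (partial_transpose R)" and j: "j < dim_col (partial_transpose R)"
  then have i4: "i < 4" and j4: "j < 4" by (auto simp: partial_transpose_def)
  have iv: "i = 0 \<or> i = 1 \<or> i = 2 \<or> i = 3" using i4 by auto
  have jv: "j = 0 \<or> j = 1 \<or> j = 2 \<or> j = 3" using j4 by auto
  have b1: "2 * (i div 2) + j mod 2 < 4" using iv jv by auto
  have b2: "2 * (j div 2) + i mod 2 < 4" using iv jv by auto
  have H: "\<And>p q. p < 4 \<Longrightarrow> q < 4 \<Longrightarrow> R $$ (p,q) = cnj (R $$ (q,p))"
    using assms(1) carrier_matD[OF assms(2)] unfolding hermitian_def by metis
  show "partial_transpose R $$ (i, j) = cnj (partial_transpose R $$ (j, i))"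
    unfolding pt_idx[OF i4 j4] pt_idx[OF j4 i4] using H[OF b1 b2] by simp
qed

lemma psd_from:
  fixes N :: "complex mat"
  assumes N: "N \<in> carrier_mat 4 4" and h: "hermitian N"
    and f: "\<And>v. v \<in> carrier_vec 4 \<Longrightarrow> \<exists>w0 w1 w2 w3. conjugate v \<bullet> (N *\<^sub>v v) = XF d e z u w0 w1 w2 w3 / 16"
    and z: "cmod z \<le> d" and u: "cmod u \<le> e"
  shows "psd N"
  unfolding psd_def
proof (intro conjI ballI)
  show "dim_row N = dim_col N" using N by simp
  show "hermitian N" by fact
  fix v :: "complex vec" assume "v \<in> carrier_vec (dim_row N)"
  then have v: "v \<in> carrier_vec 4" using N by simp
  obtain w0 w1 w2 w3 where e: "conjugate v \<bullet> (N *\<^sub>v v) = XF d e z u w0 w1 w2 w3 / 16" using f[OF v] by blast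
  from XF_nonneg[OF z u, of w0 w1 w2 w3]
  show "Im (conjugate v \<bullet> (N *\<^sub>v v)) = 0" "0 \<le> Re (conjugate v \<bullet> (N *\<^sub>v v))"
    unfolding e by simp_all
qed

lemma cm1: "cmod (- complex_of_real b1 - \<i>*complex_of_real b2 + \<i>*complex_of_real b3 - complex_of_real b4) = Lplus b1 b2 b3 b4"
  unfolding cmod_def Lplus_def by (simp add: power2_eq_square algebra_simps)
lemma cm2: "cmod (- complex_of_real b1 + \<i>*complex_of_real b2 + \<i>*complex_of_real b3 + complex_of_real b4) = Lminus b1 b2 b3 b4"
  unfolding cmod_def Lminus_def by (simp add: power2_eq_square algebra_simps)
lemma cm3: "cmod (complex_of_real b1 - \<i>*complex_of_real b2 - \<i>*complex_of_real b3 - complex_of_real b4) = Lminus b1 b2 b3 b4"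
  unfolding cmod_def Lminus_def by (simp add: power2_eq_square algebra_simps)
lemma cm4: "cmod (complex_of_real b1 + \<i>*complex_of_real b2 - \<i>*complex_of_real b3 + complex_of_real b4) = Lplus b1 b2 b3 b4"
  unfolding cmod_def Lplus_def by (simp add: power2_eq_square algebra_simps)

lemma case11: assumes "v \<in> carrier_vec 4"
  shows "conjugate v \<bullet> (partial_transpose (group2_state 1 1 0 0 b0 b1 b2 b3 b4) *\<^sub>v v) =
   XF (1+b0) (1-b0) (- complex_of_real b1 - \<i>*complex_of_real b2 + \<i>*complex_of_real b3 - complex_of_real b4) (- complex_of_real b1 + \<i>*complex_of_real b2 + \<i>*complex_of_real b3 + complex_of_real b4)
     (\<i>*v$0 + \<i>*v$1 + \<i>*v$2 + \<i>*v$3) (-v$0 + v$1 - v$2 + v$3) (-v$0 - v$1 + v$2 + v$3) (-\<i>*v$0 + \<i>*v$1 + \<i>*v$2 - \<i>*v$3) / 16"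
  unfolding qf[OF assms pt_dim] sum4
  apply (simp add: pt_idx g2_idx pp_idx pauli_tab pauli_tab2 nxt_simps XF_def)
  by (simp add: algebra_simps)

lemma psd11:
  assumes "Lplus b1 b2 b3 b4 \<le> 1 + b0" "Lminus b1 b2 b3 b4 \<le> 1 - b0"
    "hermitian (partial_transpose (group2_state 1 1 0 0 b0 b1 b2 b3 b4))"
  shows "psd (partial_transpose (group2_state 1 1 0 0 b0 b1 b2 b3 b4))"
  apply (rule psd_from[OF pt_dim assms(3), of "(1+b0)" "(1-b0)" "(- complex_of_real b1 - \<i>*complex_of_real b2 + \<i>*complex_of_real b3 - complex_of_real b4)" "(- complex_of_real b1 + \<i>*complex_of_real b2 + \<i>*complex_of_real b3 + complex_of_real b4)"])
  subgoal for v using case11[of v] by blast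
  subgoal using assms(1,2) unfolding cm1 by simp
  subgoal using assms(1,2) unfolding cm2 by simp
  done

lemma case12: assumes "v \<in> carrier_vec 4"
  shows "conjugate v \<bullet> (partial_transpose (group2_state 1 2 0 0 b0 b1 b2 b3 b4) *\<^sub>v v) =
   XF (1-b0) (1+b0) (complex_of_real b1 - \<i>*complex_of_real b2 - \<i>*complex_of_real b3 - complex_of_real b4) (complex_of_real b1 + \<i>*complex_of_real b2 - \<i>*complex_of_real b3 + complex_of_real b4)
     (-v$0 + \<i>*v$1 - v$2 + \<i>*v$3) (-v$0 - \<i>*v$1 - v$2 - \<i>*v$3) (-\<i>*v$0 - v$1 + \<i>*v$2 + v$3) (-\<i>*v$0 + v$1 + \<i>*v$2 - v$3) / 16"
  unfolding qf[OF assms pt_dim] sum4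
  apply (simp add: pt_idx g2_idx pp_idx pauli_tab pauli_tab2 nxt_simps XF_def)
  by (simp add: algebra_simps)

lemma psd12:
  assumes "Lplus b1 b2 b3 b4 \<le> 1 + b0" "Lminus b1 b2 b3 b4 \<le> 1 - b0"
    "hermitian (partial_transpose (group2_state 1 2 0 0 b0 b1 b2 b3 b4))"
  shows "psd (partial_transpose (group2_state 1 2 0 0 b0 b1 b2 b3 b4))"
  apply (rule psd_from[OF pt_dim assms(3), of "(1-b0)" "(1+b0)" "(complex_of_real b1 - \<i>*complex_of_real b2 - \<i>*complex_of_real b3 - complex_of_real b4)" "(complex_of_real b1 + \<i>*complex_of_real b2 - \<i>*complex_of_real b3 + complex_of_real b4)"])
  subgoal for v using case12[of v] by blast
  subgoal using assms(1,2) unfolding cm3 by simp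
  subgoal using assms(1,2) unfolding cm4 by simp
  done

lemma case13: assumes "v \<in> carrier_vec 4"
  shows "conjugate v \<bullet> (partial_transpose (group2_state 1 3 0 0 b0 b1 b2 b3 b4) *\<^sub>v v) =
   XF (1+b0) (1-b0) (complex_of_real b1 + \<i>*complex_of_real b2 - \<i>*complex_of_real b3 + complex_of_real b4) (complex_of_real b1 - \<i>*complex_of_real b2 - \<i>*complex_of_real b3 - complex_of_real b4)
     ((-1 - \<i>)*v$0 + (-1 - \<i>)*v$2) ((-1 - \<i>)*v$1 + (-1 - \<i>)*v$3) ((1 - \<i>)*v$0 + (-1 + \<i>)*v$2) ((1 - \<i>)*v$1 + (-1 + \<i>)*v$3) / 16"
  unfolding qf[OF assms pt_dim] sum4
  apply (simp add: pt_idx g2_idx pp_idx pauli_tab pauli_tab2 nxt_simps XF_def)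
  by (simp add: algebra_simps)

lemma psd13:
  assumes "Lplus b1 b2 b3 b4 \<le> 1 + b0" "Lminus b1 b2 b3 b4 \<le> 1 - b0"
    "hermitian (partial_transpose (group2_state 1 3 0 0 b0 b1 b2 b3 b4))"
  shows "psd (partial_transpose (group2_state 1 3 0 0 b0 b1 b2 b3 b4))"
  apply (rule psd_from[OF pt_dim assms(3), of "(1+b0)" "(1-b0)" "(complex_of_real b1 + \<i>*complex_of_real b2 - \<i>*complex_of_real b3 + complex_of_real b4)" "(complex_of_real b1 - \<i>*complex_of_real b2 - \<i>*complex_of_real b3 - complex_of_real b4)"])
  subgoal for v using case13[of v] by blast
  subgoal using assms(1,2) unfolding cm4 by simp
  subgoal using assms(1,2) unfolding cm3 by simp
  done

lemma case21: assumes "v \<in> carrier_vec 4"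
  shows "conjugate v \<bullet> (partial_transpose (group2_state 2 1 0 0 b0 b1 b2 b3 b4) *\<^sub>v v) =
   XF (1+b0) (1-b0) (- complex_of_real b1 - \<i>*complex_of_real b2 + \<i>*complex_of_real b3 - complex_of_real b4) (- complex_of_real b1 + \<i>*complex_of_real b2 + \<i>*complex_of_real b3 + complex_of_real b4)
     (-v$0 - v$1 + \<i>*v$2 + \<i>*v$3) (-\<i>*v$0 + \<i>*v$1 - v$2 + v$3) (-v$0 - v$1 - \<i>*v$2 - \<i>*v$3) (-\<i>*v$0 + \<i>*v$1 + v$2 - v$3) / 16"
  unfolding qf[OF assms pt_dim] sum4
  apply (simp add: pt_idx g2_idx pp_idx pauli_tab pauli_tab2 nxt_simps XF_def)
  by (simp add: algebra_simps)

lemma psd21: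
  assumes "Lplus b1 b2 b3 b4 \<le> 1 + b0" "Lminus b1 b2 b3 b4 \<le> 1 - b0"
    "hermitian (partial_transpose (group2_state 2 1 0 0 b0 b1 b2 b3 b4))"
  shows "psd (partial_transpose (group2_state 2 1 0 0 b0 b1 b2 b3 b4))"
  apply (rule psd_from[OF pt_dim assms(3), of "(1+b0)" "(1-b0)" "(- complex_of_real b1 - \<i>*complex_of_real b2 + \<i>*complex_of_real b3 - complex_of_real b4)" "(- complex_of_real b1 + \<i>*complex_of_real b2 + \<i>*complex_of_real b3 + complex_of_real b4)"])
  subgoal for v using case21[of v] by blast
  subgoal using assms(1,2) unfolding cm1 by simp
  subgoal using assms(1,2) unfolding cm2 by simp
  done

lemma case22: assumes "v \<in> carrier_vec 4"
  shows "conjugate v \<bullet> (partial_transpose (group2_state 2 2 0 0 b0 b1 b2 b3 b4) *\<^sub>v v) =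
   XF (1-b0) (1+b0) (complex_of_real b1 - \<i>*complex_of_real b2 - \<i>*complex_of_real b3 - complex_of_real b4) (complex_of_real b1 + \<i>*complex_of_real b2 - \<i>*complex_of_real b3 + complex_of_real b4)
     (-\<i>*v$0 - v$1 - v$2 + \<i>*v$3) (-\<i>*v$0 + v$1 - v$2 - \<i>*v$3) (-\<i>*v$0 - v$1 + v$2 - \<i>*v$3) (-\<i>*v$0 + v$1 + v$2 + \<i>*v$3) / 16"
  unfolding qf[OF assms pt_dim] sum4
  apply (simp add: pt_idx g2_idx pp_idx pauli_tab pauli_tab2 nxt_simps XF_def)
  by (simp add: algebra_simps)

lemma psd22:
  assumes "Lplus b1 b2 b3 b4 \<le> 1 + b0" "Lminus b1 b2 b3 b4 \<le> 1 - b0"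
    "hermitian (partial_transpose (group2_state 2 2 0 0 b0 b1 b2 b3 b4))"
  shows "psd (partial_transpose (group2_state 2 2 0 0 b0 b1 b2 b3 b4))"
  apply (rule psd_from[OF pt_dim assms(3), of "(1-b0)" "(1+b0)" "(complex_of_real b1 - \<i>*complex_of_real b2 - \<i>*complex_of_real b3 - complex_of_real b4)" "(complex_of_real b1 + \<i>*complex_of_real b2 - \<i>*complex_of_real b3 + complex_of_real b4)"])
  subgoal for v using case22[of v] by blast
  subgoal using assms(1,2) unfolding cm3 by simp
  subgoal using assms(1,2) unfolding cm4 by simp
  done

lemma case23: assumes "v \<in> carrier_vec 4"
  shows "conjugate v \<bullet> (partial_transpose (group2_state 2 3 0 0 b0 b1 b2 b3 b4) *\<^sub>v v) =
   XF (1+b0) (1-b0) (complex_of_real b1 + \<i>*complex_of_real b2 - \<i>*complex_of_real b3 + complex_of_real b4) (complex_of_real b1 - \<i>*complex_of_real b2 - \<i>*complex_of_real b3 - complex_of_real b4)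
     ((1 - \<i>)*v$0 + (-1 - \<i>)*v$2) ((1 - \<i>)*v$1 + (-1 - \<i>)*v$3) ((1 - \<i>)*v$0 + (1 + \<i>)*v$2) ((1 - \<i>)*v$1 + (1 + \<i>)*v$3) / 16"
  unfolding qf[OF assms pt_dim] sum4
  apply (simp add: pt_idx g2_idx pp_idx pauli_tab pauli_tab2 nxt_simps XF_def)
  by (simp add: algebra_simps)

lemma psd23:
  assumes "Lplus b1 b2 b3 b4 \<le> 1 + b0" "Lminus b1 b2 b3 b4 \<le> 1 - b0"
    "hermitian (partial_transpose (group2_state 2 3 0 0 b0 b1 b2 b3 b4))"
  shows "psd (partial_transpose (group2_state 2 3 0 0 b0 b1 b2 b3 b4))"
  apply (rule psd_from[OF pt_dim assms(3), of "(1+b0)" "(1-b0)" "(complex_of_real b1 + \<i>*complex_of_real b2 - \<i>*complex_of_real b3 + complex_of_real b4)" "(complex_of_real b1 - \<i>*complex_of_real b2 - \<i>*complex_of_real b3 - complex_of_real b4)"])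
  subgoal for v using case23[of v] by blast
  subgoal using assms(1,2) unfolding cm4 by simp
  subgoal using assms(1,2) unfolding cm3 by simp
  done

lemma case31: assumes "v \<in> carrier_vec 4"
  shows "conjugate v \<bullet> (partial_transpose (group2_state 3 1 0 0 b0 b1 b2 b3 b4) *\<^sub>v v) =
   XF (1+b0) (1-b0) (- complex_of_real b1 - \<i>*complex_of_real b2 + \<i>*complex_of_real b3 - complex_of_real b4) (- complex_of_real b1 + \<i>*complex_of_real b2 + \<i>*complex_of_real b3 + complex_of_real b4)
     ((-1 - \<i>)*v$0 + (-1 - \<i>)*v$1) ((1 - \<i>)*v$0 + (-1 + \<i>)*v$1) ((-1 - \<i>)*v$2 + (-1 - \<i>)*v$3) ((1 - \<i>)*v$2 + (-1 + \<i>)*v$3) / 16"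
  unfolding qf[OF assms pt_dim] sum4
  apply (simp add: pt_idx g2_idx pp_idx pauli_tab pauli_tab2 nxt_simps XF_def)
  by (simp add: algebra_simps)

lemma psd31:
  assumes "Lplus b1 b2 b3 b4 \<le> 1 + b0" "Lminus b1 b2 b3 b4 \<le> 1 - b0"
    "hermitian (partial_transpose (group2_state 3 1 0 0 b0 b1 b2 b3 b4))"
  shows "psd (partial_transpose (group2_state 3 1 0 0 b0 b1 b2 b3 b4))"
  apply (rule psd_from[OF pt_dim assms(3), of "(1+b0)" "(1-b0)" "(- complex_of_real b1 - \<i>*complex_of_real b2 + \<i>*complex_of_real b3 - complex_of_real b4)" "(- complex_of_real b1 + \<i>*complex_of_real b2 + \<i>*complex_of_real b3 + complex_of_real b4)"])
  subgoal for v using case31[of v] by blast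
  subgoal using assms(1,2) unfolding cm1 by simp
  subgoal using assms(1,2) unfolding cm2 by simp
  done

lemma case32: assumes "v \<in> carrier_vec 4"
  shows "conjugate v \<bullet> (partial_transpose (group2_state 3 2 0 0 b0 b1 b2 b3 b4) *\<^sub>v v) =
   XF (1-b0) (1+b0) (complex_of_real b1 - \<i>*complex_of_real b2 - \<i>*complex_of_real b3 - complex_of_real b4) (complex_of_real b1 + \<i>*complex_of_real b2 - \<i>*complex_of_real b3 + complex_of_real b4)
     ((1 - \<i>)*v$0 + (-1 - \<i>)*v$1) ((1 - \<i>)*v$0 + (1 + \<i>)*v$1) ((1 - \<i>)*v$2 + (-1 - \<i>)*v$3) ((1 - \<i>)*v$2 + (1 + \<i>)*v$3) / 16"
  unfolding qf[OF assms pt_dim] sum4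
  apply (simp add: pt_idx g2_idx pp_idx pauli_tab pauli_tab2 nxt_simps XF_def)
  by (simp add: algebra_simps)

lemma psd32:
  assumes "Lplus b1 b2 b3 b4 \<le> 1 + b0" "Lminus b1 b2 b3 b4 \<le> 1 - b0"
    "hermitian (partial_transpose (group2_state 3 2 0 0 b0 b1 b2 b3 b4))"
  shows "psd (partial_transpose (group2_state 3 2 0 0 b0 b1 b2 b3 b4))"
  apply (rule psd_from[OF pt_dim assms(3), of "(1-b0)" "(1+b0)" "(complex_of_real b1 - \<i>*complex_of_real b2 - \<i>*complex_of_real b3 - complex_of_real b4)" "(complex_of_real b1 + \<i>*complex_of_real b2 - \<i>*complex_of_real b3 + complex_of_real b4)"])
  subgoal for v using case32[of v] by blast
  subgoal using assms(1,2) unfolding cm3 by simp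
  subgoal using assms(1,2) unfolding cm4 by simp
  done

lemma case33: assumes "v \<in> carrier_vec 4"
  shows "conjugate v \<bullet> (partial_transpose (group2_state 3 3 0 0 b0 b1 b2 b3 b4) *\<^sub>v v) =
   XF (1+b0) (1-b0) (complex_of_real b1 + \<i>*complex_of_real b2 - \<i>*complex_of_real b3 + complex_of_real b4) (complex_of_real b1 - \<i>*complex_of_real b2 - \<i>*complex_of_real b3 - complex_of_real b4)
     (2*v$0) (2*v$1) (2*v$2) (2*v$3) / 16"
  unfolding qf[OF assms pt_dim] sum4
  apply (simp add: pt_idx g2_idx pp_idx pauli_tab pauli_tab2 nxt_simps XF_def)
  by (simp add: algebra_simps)

lemma psd33:
  assumes "Lplus b1 b2 b3 b4 \<le> 1 + b0" "Lminus b1 b2 b3 b4 \<le> 1 - b0"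
    "hermitian (partial_transpose (group2_state 3 3 0 0 b0 b1 b2 b3 b4))"
  shows "psd (partial_transpose (group2_state 3 3 0 0 b0 b1 b2 b3 b4))"
  apply (rule psd_from[OF pt_dim assms(3), of "(1+b0)" "(1-b0)" "(complex_of_real b1 + \<i>*complex_of_real b2 - \<i>*complex_of_real b3 + complex_of_real b4)" "(complex_of_real b1 - \<i>*complex_of_real b2 - \<i>*complex_of_real b3 - complex_of_real b4)"])
  subgoal for v using case33[of v] by blast
  subgoal using assms(1,2) unfolding cm4 by simp
  subgoal using assms(1,2) unfolding cm3 by simp
  done

lemma psd_eig:
  fixes A :: "complex mat"
  assumes p: "psd A" and A: "A \<in> carrier_mat n n" and h: "has_eigenvalues A M"
    and x: "complex_of_real x \<in># M"
  shows "0 \<le> x"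
proof -
  have "(\<lambda>x. [:- x, 1:]) (complex_of_real x) \<in># image_mset (\<lambda>x. [:- x, 1:]) M"
    using x by simp
  then have "[:- complex_of_real x, 1:] dvd char_poly A"
    using h unfolding has_eigenvalues_def by (metis dvd_prod_mset)
  then have "poly (char_poly A) (complex_of_real x) = 0" by (simp add: poly_eq_0_iff_dvd)
  then have "eigenvalue A (complex_of_real x)" using eigenvalue_root_char_poly[OF A] by simp
  then obtain v where v: "v \<in> carrier_vec n" "v \<noteq> 0\<^sub>v n" "A *\<^sub>v v = complex_of_real x \<cdot>\<^sub>v v"
    unfolding eigenvalue_def eigenvector_def using A by auto
  have e: "conjugate v \<bullet> (A *\<^sub>v v) = complex_of_real x * (conjugate v \<bullet> v)"
    using v by simp
  have "v \<bullet>c v > 0" using v by simp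
  moreover have "v \<bullet>c v = conjugate v \<bullet> v" using conjugate_vec_sprod_comm[OF v(1) v(1)] .
  ultimately have pos: "0 < Re (conjugate v \<bullet> v)" "Im (conjugate v \<bullet> v) = 0"
    by (auto simp: less_complex_def)
  have "0 \<le> Re (conjugate v \<bullet> (A *\<^sub>v v))" using p v A unfolding psd_def by auto
  then have "0 \<le> x * Re (conjugate v \<bullet> v)" unfolding e using pos by simp
  then show ?thesis using pos(1) by (simp add: zero_le_mult_iff)
qed

theorem proposition1:
  fixes a b :: nat and b0 b1 b2 b3 b4 :: real and R :: "complex mat"
  assumes "a \<in> {1, 2, 3}" and "b \<in> {1, 2, 3}"
    and "R = group2_state a b 0 0 b0 b1 b2 b3 b4"
    and "typeI R b0 b1 b2 b3 b4"
    and "valid_state R"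
    and "entangled R"
  shows "b0 < 0 \<longleftrightarrow> Lplus b1 b2 b3 b4 > Lminus b1 b2 b3 b4"
proof -
  let ?Lp = "Lplus b1 b2 b3 b4" and ?Lm = "Lminus b1 b2 b3 b4"
  have RC: "R \<in> carrier_mat 4 4" and hR: "hermitian R" and pR: "psd R"
    using assms(5) unfolding valid_state_def by auto
  have ev: "has_eigenvalues R (image_mset complex_of_real
        {# (1 + b0 + ?Lm)/4, (1 + b0 - ?Lm)/4, (1 - b0 + ?Lp)/4, (1 - b0 - ?Lp)/4 #})"
    using assms(4) unfolding typeI_def Let_def by simp
  have h1: "0 \<le> (1 + b0 - ?Lm)/4"
    by (rule psd_eig[OF pR RC ev]) simp
  have h2: "0 \<le> (1 - b0 - ?Lp)/4"
    by (rule psd_eig[OF pR RC ev]) simp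
  have hPT: "hermitian (partial_transpose R)" using pt_herm[OF hR RC] .
  have h3: "\<not> (?Lp \<le> 1 + b0 \<and> ?Lm \<le> 1 - b0)"
  proof
    assume c: "?Lp \<le> 1 + b0 \<and> ?Lm \<le> 1 - b0"
    have ab: "a = 1 \<or> a = 2 \<or> a = 3" "b = 1 \<or> b = 2 \<or> b = 3" using assms(1,2) by auto
    have c1: "?Lp \<le> 1 + b0" and c2: "?Lm \<le> 1 - b0" using c by auto
    have "psd (partial_transpose R)"
      using ab hPT psd11[OF c1 c2] psd12[OF c1 c2] psd13[OF c1 c2] psd21[OF c1 c2] psd22[OF c1 c2]
        psd23[OF c1 c2] psd31[OF c1 c2] psd32[OF c1 c2] psd33[OF c1 c2] unfolding assms(3)
      by (elim disjE; hypsubst; blast)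
    then show False using assms(6) unfolding entangled_def by simp
  qed
  from h3 have "1 + b0 < ?Lp \<or> 1 - b0 < ?Lm" by auto
  then show ?thesis using h1 h2 by auto
qed

end
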